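(* Let $q\ge 2$, $n\ge 1$, $h\in F(n,q)$ and $u\in\Pi([n])$. Then $$\kappa(h,u)=\left\lceil \log_q\big(\chi(G_{h,u})\big)\right\rceil ,$$ where $\chi(G_{h,u})$ is the chromatic number of the confusion graph $G_{h,u}$.
   Context: Let $q\ge 2$, $A=\{0,1,\dots,q-1\}$, $[n]=\{1,\dots,n\}$, and let $F(n,q)$ be the set of all maps $A^n\to A^n$ (automata networks). For $f\in F(m,q)$ and $i\in[m]$, $f_i:A^m\to A$ is the $i$-th coordinate function of $f$. The map $f^i\in F(m,q)$ is defined by $f^i(x)=(x_1,\dots,x_{i-1},f_i(x),x_{i+1},\dots,x_m)$. For $I\subseteq[m]$, $f^I\in F(m,q)$ is defined by $f^I(x)_j=f_j(x)$ if $j\in I$ and $f^I(x)_j=x_j$ otherwise. For a word $w=(w_1,\dots,w_t)$ over $[m]$, $f^w=f^{w_t}\circ\cdots\circ f^{w_1}$. $\Pi([m])$ is the set of permutations of $[m]$, written as words $w=(w_1,\dots,w_m)$ in which each element of $[m]$ occurs once; for $i\in[m]$, $w(i)$ denotes the position $j$ with $w_j=i$. $\mathrm{pr}_{[n]}:A^m\to A^n$ is the projection onto the first $n$ coordinates. For $m\ge n$, a pair $(f,w)$ with $f\in F(m,q)$, $w\in\Pi([m])$ sequentializes $h\in F(n,q)$ if $\mathrm{pr}_{[n]}\circ f^w=h\circ \mathrm{pr}_{[n]}$. For $u\in\Pi([n])$, $w\in\Pi([m])$ respects $u$ if for all $i,j\in[n]$, $u(i)<u(j)$ implies $w(i)<w(j)$.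 The cost of sequentialization $\kappa(h,u)$ is the smallest $k\ge 0$ such that there exist $f\in F(n+k,q)$ and $w\in\Pi([n+k])$ respecting $u$ such that $(f,w)$ sequentializes $h$. The confusion graph $G_{h,u}$ is the undirected graph with vertex set $A^n$ in which $x\neq x'$ are adjacent iff $h(x)\neq h(x')$ and there exists $i\in[n]$ with $h^{\{u_1,\dots,u_i\}}(x)=h^{\{u_1,\dots,u_i\}}(x')$. *)

theory Defs
  imports Complex_Main
begin

text \<open>Configurations of A^n, A = {0..q-1}, represented as functions nat => nat
  supported on [n] = {1..n} (value 0 outside [n]).\<close>
definition cfg :: "nat \<Rightarrow> nat \<Rightarrow> (nat \<Rightarrow> nat) set" where
  "cfg q n = {x. (\<forall>i\<in>{1..n}. x i < q) \<and> (\<forall>i. i \<notin> {1..n} \<longrightarrow> x i = 0)}"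

text \<open>Automata networks F(n,q): maps sending A^n into A^n (only their values on A^n matter).\<close>
definition is_AN :: "nat \<Rightarrow> nat \<Rightarrow> ((nat \<Rightarrow> nat) \<Rightarrow> (nat \<Rightarrow> nat)) \<Rightarrow> bool" where
  "is_AN q n f \<longleftrightarrow> (\<forall>x\<in>cfg q n. f x \<in> cfg q n)"

definition upd :: "((nat \<Rightarrow> nat) \<Rightarrow> (nat \<Rightarrow> nat)) \<Rightarrow> nat set \<Rightarrow> (nat \<Rightarrow> nat) \<Rightarrow> (nat \<Rightarrow> nat)" where
  "upd f I x = (\<lambda>j. if j \<in> I then f x j else x j)"

fun seqw :: "((nat \<Rightarrow> nat) \<Rightarrow> (nat \<Rightarrow> nat)) \<Rightarrow> nat list \<Rightarrow> (nat \<Rightarrow> nat) \<Rightarrow> (nat \<Rightarrow> nat)" where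
  "seqw f [] = id"
| "seqw f (i # w) = seqw f w \<circ> upd f {i}"

definition is_perm :: "nat \<Rightarrow> nat list \<Rightarrow> bool" where
  "is_perm m w \<longleftrightarrow> distinct w \<and> set w = {1..m}"

text \<open>w(i): the (1-based) position of i in w.\<close>
definition pos :: "nat list \<Rightarrow> nat \<Rightarrow> nat" where
  "pos w i = (THE k. k \<in> {1..length w} \<and> w ! (k - 1) = i)"

definition respects_order :: "nat \<Rightarrow> nat list \<Rightarrow> nat list \<Rightarrow> bool" where
  "respects_order n u w \<longleftrightarrow> (\<forall>i\<in>{1..n}. \<forall>j\<in>{1..n}. pos u i < pos u j \<longrightarrow> pos w i < pos w j)"

definition proj :: "nat \<Rightarrow> (nat \<Rightarrow> nat) \<Rightarrow> (nat \<Rightarrow> nat)" where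
  "proj n x = (\<lambda>j. if j \<in> {1..n} then x j else 0)"

definition sequentializes ::
  "nat \<Rightarrow> nat \<Rightarrow> nat \<Rightarrow> ((nat \<Rightarrow> nat) \<Rightarrow> (nat \<Rightarrow> nat)) \<Rightarrow> nat list
     \<Rightarrow> ((nat \<Rightarrow> nat) \<Rightarrow> (nat \<Rightarrow> nat)) \<Rightarrow> bool" where
  "sequentializes q m n f w h \<longleftrightarrow> (\<forall>x\<in>cfg q m. proj n (seqw f w x) = h (proj n x))"

definition kappa :: "nat \<Rightarrow> nat \<Rightarrow> ((nat \<Rightarrow> nat) \<Rightarrow> (nat \<Rightarrow> nat)) \<Rightarrow> nat list \<Rightarrow> nat" where
  "kappa q n h u = (LEAST k. \<exists>f w. is_AN q (n + k) f \<and> is_perm (n + k) w \<and> respects_order n u w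
                                  \<and> sequentializes q (n + k) n f w h)"

definition confusion_adj :: "nat \<Rightarrow> nat \<Rightarrow> ((nat \<Rightarrow> nat) \<Rightarrow> (nat \<Rightarrow> nat)) \<Rightarrow> nat list
     \<Rightarrow> (nat \<Rightarrow> nat) \<Rightarrow> (nat \<Rightarrow> nat) \<Rightarrow> bool" where
  "confusion_adj q n h u x x' \<longleftrightarrow> x \<in> cfg q n \<and> x' \<in> cfg q n \<and> x \<noteq> x' \<and> h x \<noteq> h x' \<and>
     (\<exists>i\<in>{1..n}. upd h (set (take i u)) x = upd h (set (take i u)) x')"

definition chromatic_number :: "'a set \<Rightarrow> ('a \<Rightarrow> 'a \<Rightarrow> bool) \<Rightarrow> nat" where
  "chromatic_number V E = (LEAST k. \<exists>c. (\<forall>v\<in>V. c v < k) \<and> (\<forall>v\<in>V. \<forall>v'\<in>V. E v v' \<longrightarrow> c v \<noteq> c v'))"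

end

theory Submission
  imports Defs "HOL-Library.FuncSet"
begin


lemma seqw_append: "seqw f (a @ b) = seqw f b \<circ> seqw f a"
  by (induction a) auto

lemma seqw_notin: "j \<notin> set w \<Longrightarrow> seqw f w x j = x j"
  by (induction w arbitrary: x) (auto simp: upd_def)

lemma seqw_cfg: "is_AN q m f \<Longrightarrow> x \<in> cfg q m \<Longrightarrow> seqw f w x \<in> cfg q m"
proof (induction w arbitrary: x)
  case Nil then show ?case by simp
next
  case (Cons a w)
  have "upd f {a} x \<in> cfg q m"
    using Cons.prems unfolding is_AN_def cfg_def upd_def by auto
  then show ?case using Cons by simp
qed

lemma pos_nth: "distinct w \<Longrightarrow> r < length w \<Longrightarrow> pos w (w!r) = Suc r"
  unfolding pos_def
proof (rule the_equality)
  assume "distinct w" "r < length w"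
  then show "Suc r \<in> {1..length w} \<and> w ! (Suc r - 1) = w ! r" by auto
next
  fix k assume d: "distinct w" "r < length w" and k: "k \<in> {1..length w} \<and> w ! (k - 1) = w ! r"
  then have "k - 1 = r" using nth_eq_iff_index_eq[of w "k-1" r] by auto
  then show "k = Suc r" using k by auto
qed

lemma pos_in: "distinct w \<Longrightarrow> j \<in> set w \<Longrightarrow> \<exists>r < length w. w!r = j \<and> pos w j = Suc r"
  by (metis in_set_conv_nth pos_nth)

lemma nth_in_take_iff: "distinct w \<Longrightarrow> r < length w \<Longrightarrow> (w!r \<in> set (take p w)) = (r < p)"
proof
  assume d: "distinct w" "r < length w" and "w!r \<in> set (take p w)"
  then obtain r' where r': "r' < length (take p w)" "take p w ! r' = w ! r"
    by (auto simp: in_set_conv_nth)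
  then have "w ! r' = w ! r" "r' < length w" "r' < p" by auto
  then have "r' = r" using d nth_eq_iff_index_eq by blast
  then show "r < p" using r' by auto
next
  assume "distinct w" "r < length w" "r < p"
  then show "w!r \<in> set (take p w)" by (auto simp: in_set_conv_nth intro!: exI[of _ r])
qed

lemma perm_len: "is_perm n u \<Longrightarrow> length u = n"
  unfolding is_perm_def by (metis card_atLeastAtMost diff_Suc_1 distinct_card)

lemma cfg_mono: "x \<in> cfg q n \<Longrightarrow> n \<le> m \<Longrightarrow> 0 < q \<Longrightarrow> x \<in> cfg q m"
  unfolding cfg_def by force

lemma proj_cfg: "x \<in> cfg q n \<Longrightarrow> proj n x = x"
  unfolding cfg_def proj_def by auto

lemma lower_core:
  assumes perm_w: "is_perm (n+k) w" and perm_u: "is_perm n u" and resp: "respects_order n u w"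
    and seqz: "sequentializes q (n+k) n f w h"
    and adj: "confusion_adj q n h u x x'" and q0: "0 < q"
  shows "restrict (seqw f w x) {n+1..n+k} \<noteq> restrict (seqw f w x') {n+1..n+k}"
proof
  assume eq: "restrict (seqw f w x) {n+1..n+k} = restrict (seqw f w x') {n+1..n+k}"
  from adj obtain i where i: "i \<in> {1..n}" and ui: "upd h (set (take i u)) x = upd h (set (take i u)) x'"
    and hx: "h x \<noteq> h x'" and xV: "x \<in> cfg q n" "x' \<in> cfg q n"
    unfolding confusion_adj_def by blast
  have lenu: "length u = n" using perm_len perm_u by blast
  have lenw: "length w = n+k" using perm_len perm_w by blast
  have du: "distinct u" "set u = {1..n}" using perm_u unfolding is_perm_def by auto
  have dw: "distinct w" "set w = {1..n+k}" using perm_w unfolding is_perm_def by auto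
  define a where "a = u ! (i-1)"
  have ilt: "i - 1 < length u" using i lenu by auto
  have aw: "a \<in> set w" using ilt du dw unfolding a_def by (metis atLeastAtMost_iff le_add1 nth_mem order_trans)
  obtain r0 where r0: "r0 < length w" "w!r0 = a" "pos w a = Suc r0" using pos_in[OF dw(1) aw] by blast
  define p where "p = Suc r0"
  have posua: "pos u a = i" unfolding a_def using pos_nth[OF du(1) ilt] i by auto
  have key: "j \<in> set (take p w) \<longleftrightarrow> j \<in> set (take i u)" if j: "j \<in> {1..n}" for j
  proof -
    have ju: "j \<in> set u" using j du(2) by simp
    obtain l where l: "l < length u" "u!l = j" "pos u j = Suc l" using pos_in[OF du(1) ju] by blast
    have jw: "j \<in> set w" using j dw by auto
    obtain r where r: "r < length w" "w!r = j" "pos w j = Suc r" using pos_in[OF dw(1) jw] by blast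
    have e1: "j \<in> set (take p w) \<longleftrightarrow> r < p" using nth_in_take_iff[OF dw(1) r(1)] r by auto
    have e2: "j \<in> set (take i u) \<longleftrightarrow> l < i" using nth_in_take_iff[OF du(1) l(1)] l by auto
    have ji: "j \<in> {1..n}" "a \<in> {1..n}" using j aw du ilt unfolding a_def by auto
    consider "l = i - 1" | "l < i - 1" | "l > i - 1" by linarith
    then show ?thesis
    proof cases
      case 1
      then have "j = a" using l a_def by simp
      then have "r = r0" using r r0 dw(1) nth_eq_iff_index_eq by blast
      then show ?thesis using e1 e2 1 p_def i by auto
    next
      case 2
      then have "pos u j < pos u a" using l posua by auto
      then have "pos w j < pos w a" using resp ji unfolding respects_order_def by blast
      then show ?thesis using e1 e2 2 p_def r r0 by auto
    next
      case 3
      then have "pos u a < pos u j" using l posua by auto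
      then have "pos w a < pos w j" using resp ji unfolding respects_order_def by blast
      then show ?thesis using e1 e2 3 p_def r r0 by auto
    qed
  qed
  have xm: "x \<in> cfg q (n+k)" "x' \<in> cfg q (n+k)" using xV cfg_mono q0 by auto
  have full: "seqw f w y = seqw f (drop p w) (seqw f (take p w) y)" for y
    by (metis append_take_drop_id comp_apply seqw_append)
  have disj: "set (take p w) \<inter> set (drop p w) = {}"
    using set_take_disj_set_drop_if_distinct dw(1) by blast
  have final_eq: "seqw f (take p w) y j = seqw f w y j" if "j \<in> set (take p w)" for y j
  proof -
    have "j \<notin> set (drop p w)" using disj that by blast
    then show ?thesis using full[of y] seqw_notin[of j "drop p w" f] by auto
  qed
  have hxj: "seqw f w y j = h y j" if "y \<in> cfg q n" "j \<in> {1..n}" for y j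
  proof -
    have "proj n (seqw f w y) = h (proj n y)" using seqz that cfg_mono q0 unfolding sequentializes_def by auto
    then have "proj n (seqw f w y) j = h y j" using proj_cfg that by simp
    then show ?thesis using that unfolding proj_def by simp
  qed
  have "seqw f (take p w) x = seqw f (take p w) x'"
  proof (rule ext)
    fix j
    show "seqw f (take p w) x j = seqw f (take p w) x' j"
    proof (cases "j \<in> {1..n}")
      case True
      show ?thesis
      proof (cases "j \<in> set (take i u)")
        case T2: True
        then have jp: "j \<in> set (take p w)" using key True by blast
        have "upd h (set (take i u)) x j = upd h (set (take i u)) x' j" using ui by simp
        then have "h x j = h x' j" using T2 unfolding upd_def by simp
        then show ?thesis using final_eq[OF jp] hxj True xV by simp
      next
        case F2: False
        then have jp: "j \<notin> set (take p w)" using key True by blast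
        have "upd h (set (take i u)) x j = upd h (set (take i u)) x' j" using ui by simp
        then have "x j = x' j" using F2 unfolding upd_def by simp
        then show ?thesis using seqw_notin[OF jp] by simp
      qed
    next
      case False
      show ?thesis
      proof (cases "j \<in> set (take p w)")
        case True
        then have "j \<in> set w" by (meson in_set_takeD)
        then have "j \<in> {n+1..n+k}" using dw False by auto
        then have "seqw f w x j = seqw f w x' j" using fun_cong[OF eq, of j] by simp
        then show ?thesis using final_eq[OF True] by simp
      next
        case F2: False
        have "x j = 0" "x' j = 0" using xV False unfolding cfg_def by auto
        then show ?thesis using seqw_notin[OF F2] by simp
      qed
    qed
  qed
  then have "seqw f w x = seqw f w x'" using full[of x] full[of x'] by simp
  moreover have "proj n (seqw f w x) = h (proj n x)" "proj n (seqw f w x') = h (proj n x')"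
    using seqz xm unfolding sequentializes_def by auto
  ultimately have "h (proj n x) = h (proj n x')" by simp
  then show False using hx proj_cfg xV by simp
qed



lemma card_P: "card (PiE {(n::nat)+1..n+k} (\<lambda>_. {..<q::nat})) = q^k"
  by (simp add: card_PiE)

lemma finite_P: "finite (PiE {(n::nat)+1..n+k} (\<lambda>_. {..<q::nat}))"
  by (rule finite_PiE) auto

lemma finite_cfg: "finite (cfg q n)"
proof -
  have inj: "inj_on (\<lambda>x. restrict x {1..n}) (cfg q n)"
  proof (rule inj_onI)
    fix x y assume xy: "x \<in> cfg q n" "y \<in> cfg q n" "restrict x {1..n} = restrict y {1..n}"
    show "x = y"
    proof (rule ext)
      fix j show "x j = y j"
      proof (cases "j \<in> {1..n}")
        case True then show ?thesis using fun_cong[OF xy(3), of j] by simp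
      next
        case False then show ?thesis using xy(1,2) unfolding cfg_def by auto
      qed
    qed
  qed
  have "(\<lambda>x. restrict x {1..n}) ` cfg q n \<subseteq> PiE {1..n} (\<lambda>_. {..<q})"
    unfolding cfg_def by auto
  then have "finite ((\<lambda>x. restrict x {1..n}) ` cfg q n)"
    by (rule finite_subset) (simp add: finite_PiE)
  then show ?thesis using finite_imageD inj by blast
qed

lemma proj_in_cfg: "x \<in> cfg q m \<Longrightarrow> n \<le> m \<Longrightarrow> proj n x \<in> cfg q n"
  unfolding cfg_def proj_def by auto

lemma lower_bound:
  assumes q0: "0 < q" and perm_w: "is_perm (n+k) w" and perm_u: "is_perm n u"
    and resp: "respects_order n u w" and seqz: "sequentializes q (n+k) n f w h"
    and anf: "is_AN q (n+k) f"
  shows "chromatic_number (cfg q n) (confusion_adj q n h u) \<le> q^k"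
proof -
  let ?P = "PiE {n+1..n+k} (\<lambda>_. {..<q})"
  obtain \<beta> where b: "bij_betw \<beta> ?P {0..<card ?P}" using ex_bij_betw_finite_nat finite_P by blast
  define c where "c x = \<beta> (restrict (seqw f w x) {n+1..n+k})" for x
  have inP: "restrict (seqw f w v) {n+1..n+k} \<in> ?P" if "v \<in> cfg q n" for v
  proof -
    have "seqw f w v \<in> cfg q (n+k)" using seqw_cfg anf cfg_mono that q0 by simp
    then show ?thesis unfolding cfg_def by auto
  qed
  have col: "\<forall>v\<in>cfg q n. c v < q^k"
    using inP b card_P unfolding c_def bij_betw_def by fastforce
  have prp: "\<forall>v\<in>cfg q n. \<forall>v'\<in>cfg q n. confusion_adj q n h u v v' \<longrightarrow> c v \<noteq> c v'"
  proof (intro ballI impI)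
    fix v v' assume vv: "v \<in> cfg q n" "v' \<in> cfg q n" "confusion_adj q n h u v v'"
    have "restrict (seqw f w v) {n+1..n+k} \<noteq> restrict (seqw f w v') {n+1..n+k}"
      using lower_core[OF perm_w perm_u resp seqz vv(3) q0] .
    then show "c v \<noteq> c v'" using b inP vv unfolding c_def bij_betw_def inj_on_def by blast
  qed
  show ?thesis unfolding chromatic_number_def
    by (rule Least_le) (use col prp in blast)
qed



lemma upper_construction:
  assumes q2: "q \<ge> 2" and anh: "is_AN q n h" and perm_u: "is_perm n u"
    and col: "\<forall>v\<in>cfg q n. c v < q^k"
    and prp: "\<forall>v\<in>cfg q n. \<forall>v'\<in>cfg q n. confusion_adj q n h u v v' \<longrightarrow> c v \<noteq> c v'"
  shows "\<exists>f w. is_AN q (n+k) f \<and> is_perm (n+k) w \<and> respects_order n u w \<and> sequentializes q (n+k) n f w h"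
proof -
  define E where "E = {n+1..n+k}"
  let ?P = "PiE E (\<lambda>_. {..<q})"
  have "card {0..<q^k} = card ?P" using card_P[of n k q] unfolding E_def by simp
  then obtain \<beta> where b: "bij_betw \<beta> {0..<q^k} ?P"
    using finite_same_card_bij[of "{0..<q^k}" ?P] finite_P[of n k q] unfolding E_def by auto
  define \<gamma> where "\<gamma> = the_inv_into {0..<q^k} \<beta>"
  have gb: "\<gamma> (\<beta> t) = t" if "t < q^k" for t
    unfolding \<gamma>_def using b that the_inv_into_f_f[of \<beta> "{0..<q^k}" t] unfolding bij_betw_def by auto
  have bP: "\<beta> t \<in> ?P" if "t < q^k" for t using b that unfolding bij_betw_def by auto
  have lenu: "length u = n" using perm_len perm_u by blast
  have du: "distinct u" "set u = {1..n}" using perm_u unfolding is_perm_def by auto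
  define f where "f y = (\<lambda>j. if j \<in> {1..n} then
      h (SOME x1. x1 \<in> cfg q n \<and> c x1 = \<gamma> (restrict y E) \<and>
          upd h (set (take (pos u j - 1) u)) x1 = proj n y) j mod q
      else if j \<in> E then \<beta> (c (proj n y)) j mod q else 0)" for y
  define ext where "ext = [n+1..<n+k+1]"
  define w where "w = ext @ u"
  have q0: "0 < q" using q2 by simp
  have fl: "f y j < q" for y j unfolding f_def using q0 by (simp split: if_split)
  have f0: "j \<notin> {1..n+k} \<Longrightarrow> f y j = 0" for y j unfolding f_def E_def by (auto split: if_split)
  have anf: "is_AN q (n+k) f"
    unfolding is_AN_def cfg_def using fl f0 by blast
  have setext: "set ext = E" unfolding ext_def E_def by auto
  have lenext: "length ext = k" unfolding ext_def by simp
  have permw: "is_perm (n+k) w"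
  proof -
    have "distinct ext" unfolding ext_def by simp
    moreover have "set ext \<inter> set u = {}" using setext du unfolding E_def by auto
    ultimately have "distinct w" unfolding w_def using du by simp
    moreover have "set w = {1..n+k}" unfolding w_def using setext du unfolding E_def by auto
    ultimately show ?thesis unfolding is_perm_def by simp
  qed
  have dw: "distinct w" using permw unfolding is_perm_def by simp
  have posw: "pos w i = k + pos u i" if "i \<in> {1..n}" for i
  proof -
    have iu: "i \<in> set u" using that du(2) by simp
    obtain l where l: "l < length u" "u!l = i" "pos u i = Suc l" using pos_in[OF du(1) iu] by blast
    have wi: "w ! (k+l) = i" unfolding w_def using lenext l by (simp add: nth_append)
    have "k + l < length w" unfolding w_def using lenext l by simp
    then have "pos w (w ! (k+l)) = Suc (k+l)" by (rule pos_nth[OF dw])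
    then show ?thesis using l wi by simp
  qed
  have resp: "respects_order n u w"
    unfolding respects_order_def
  proof (intro ballI impI)
    fix i j assume ij: "i \<in> {1..n}" "j \<in> {1..n}" "pos u i < pos u j"
    show "pos w i < pos w j" using posw[OF ij(1)] posw[OF ij(2)] ij(3) by linarith
  qed
  have seqz: "sequentializes q (n+k) n f w h"
    unfolding sequentializes_def
  proof
    fix x assume x: "x \<in> cfg q (n+k)"
    define x0 where "x0 = proj n x"
    have x0V: "x0 \<in> cfg q n" unfolding x0_def using proj_in_cfg x by simp
    have stage1: "seqw f e y j = (if j \<in> set e then \<beta> (c x0) j mod q else y j)"
      if "proj n y = x0" "set e \<subseteq> E" for e y j
      using that
    proof (induction e arbitrary: y)
      case Nil then show ?case by simp
    next
      case (Cons a e)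
      have aE: "a \<in> E" "a \<notin> {1..n}" using Cons.prems unfolding E_def by auto
      have p1: "proj n (upd f {a} y) = x0"
        using Cons.prems(1) aE unfolding proj_def upd_def by auto
      have "seqw f (a # e) y j = seqw f e (upd f {a} y) j" by simp
      also have "\<dots> = (if j \<in> set e then \<beta> (c x0) j mod q else upd f {a} y j)"
        using Cons.IH[OF p1] Cons.prems by auto
      also have "\<dots> = (if j \<in> set (a#e) then \<beta> (c x0) j mod q else y j)"
        using aE Cons.prems(1) unfolding upd_def f_def by auto
      finally show ?case .
    qed
    define y1 where "y1 = seqw f ext x"
    have cx0: "c x0 < q^k" using col x0V by simp
    have y1a: "proj n y1 = x0"
    proof (rule ext)
      fix j show "proj n y1 j = x0 j"
        using stage1[of x ext j] setext unfolding y1_def x0_def proj_def E_def by auto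
    qed
    have y1b: "restrict y1 E = \<beta> (c x0)"
    proof (rule ext)
      fix j
      have "\<beta> (c x0) \<in> ?P" using bP cx0 by simp
      then have "j \<in> E \<Longrightarrow> \<beta> (c x0) j < q" "j \<notin> E \<Longrightarrow> \<beta> (c x0) j = undefined" by auto
      then show "restrict y1 E j = \<beta> (c x0) j"
        using stage1[of x ext j] setext unfolding y1_def x0_def by auto
    qed
    have stage2: "\<forall>l y. n - l = d \<longrightarrow> l \<le> n \<longrightarrow> proj n y = upd h (set (take l u)) x0 \<longrightarrow>
        restrict y E = \<beta> (c x0) \<longrightarrow> proj n (seqw f (drop l u) y) = h x0" for d
    proof (induction d)
      case 0
      show ?case
      proof (intro allI impI)
        fix l y assume a: "n - l = 0" "l \<le> n" "proj n y = upd h (set (take l u)) x0"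
        then have "l = n" by simp
        then have "proj n y = upd h {1..n} x0" using a lenu du by simp
        moreover have "upd h {1..n} x0 = h x0"
        proof (rule ext)
          fix j show "upd h {1..n} x0 j = h x0 j"
            using x0V anh unfolding upd_def is_AN_def cfg_def by auto
        qed
        ultimately show "proj n (seqw f (drop l u) y) = h x0" using \<open>l = n\<close> lenu by simp
      qed
    next
      case (Suc d)
      show ?case
      proof (intro allI impI)
        fix l y assume a: "n - l = Suc d" "l \<le> n" "proj n y = upd h (set (take l u)) x0"
          "restrict y E = \<beta> (c x0)"
        have ln: "l < n" using a by simp
        define b where "b = u ! l"
        have bn: "b \<in> {1..n}" unfolding b_def using ln lenu du by (metis nth_mem)
        have posb: "pos u b = Suc l" unfolding b_def using pos_nth[OF du(1)] ln lenu by simp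
        define PP where "PP x1 = (x1 \<in> cfg q n \<and> c x1 = \<gamma> (restrict y E) \<and>
          upd h (set (take (pos u b - 1) u)) x1 = proj n y)" for x1
        have P0: "PP x0" unfolding PP_def using x0V a(3,4) gb cx0 posb by simp
        define x1 where "x1 = (SOME x1. PP x1)"
        have P1: "PP x1" unfolding x1_def using P0 by (metis someI)
        have hb: "h x1 b = h x0 b"
        proof (cases "x1 = x0 \<or> h x1 = h x0")
          case True then show ?thesis by auto
        next
          case False
          have ueq: "upd h (set (take l u)) x1 = upd h (set (take l u)) x0"
            using P1 a(3) posb unfolding PP_def by simp
          show ?thesis
          proof (cases "l = 0")
            case True
            then have "x1 = x0" using ueq by (simp add: upd_def)
            then show ?thesis by simp
          next
            case F2: False
            have "confusion_adj q n h u x1 x0"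
              unfolding confusion_adj_def using P1 x0V False ueq F2 ln
              unfolding PP_def by (intro conjI bexI[of _ l]) auto
            then have "c x1 \<noteq> c x0" using prp P1 x0V unfolding PP_def by blast
            moreover have "c x1 = c x0" using P1 a(4) gb cx0 unfolding PP_def by simp
            ultimately show ?thesis by simp
          qed
        qed
        have fyb: "f y b = h x0 b"
        proof -
          have "f y b = h x1 b mod q" unfolding f_def x1_def PP_def using bn by simp
          also have "\<dots> = h x0 b" using hb x0V anh bn unfolding is_AN_def cfg_def by auto
          finally show ?thesis .
        qed
        define y' where "y' = upd f {b} y"
        have du': "drop l u = b # drop (Suc l) u" unfolding b_def using ln lenu
          by (simp add: Cons_nth_drop_Suc)
        have tk: "take (Suc l) u = take l u @ [b]" unfolding b_def using ln lenu
          by (simp add: take_Suc_conv_app_nth)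
        have y'a: "proj n y' = upd h (set (take (Suc l) u)) x0"
        proof (rule ext)
          fix j
          have sub: "set (take (Suc l) u) \<subseteq> {1..n}" using du set_take_subset by metis
          show "proj n y' j = upd h (set (take (Suc l) u)) x0 j"
          proof (cases "j \<in> {1..n}")
            case True
            have "proj n y j = upd h (set (take l u)) x0 j" using a(3) by simp
            then show ?thesis using True fyb unfolding y'_def tk upd_def proj_def by auto
          next
            case False
            then have "j \<notin> set (take (Suc l) u)" using sub by blast
            then show ?thesis using False x0V unfolding y'_def upd_def proj_def cfg_def by auto
          qed
        qed
        have y'b: "restrict y' E = \<beta> (c x0)"
        proof -
          have "b \<notin> E" using bn unfolding E_def by auto
          then have "restrict y' E = restrict y E" unfolding y'_def upd_def by auto
          then show ?thesis using a(4) by simp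
        qed
        have "proj n (seqw f (drop (Suc l) u) y') = h x0"
        proof -
          have "n - Suc l = d" "Suc l \<le> n" using a(1) ln by auto
          then show ?thesis using Suc.IH y'a y'b by blast
        qed
        then show "proj n (seqw f (drop l u) y) = h x0" using du' unfolding y'_def by simp
      qed
    qed
    have u0: "upd h (set (take 0 u)) x0 = x0" by (simp add: upd_def)
    have "proj n (seqw f (drop 0 u) y1) = h x0"
      by (rule stage2[of n, rule_format, of 0 y1]) (use y1a y1b u0 in auto)
    then have "proj n (seqw f u y1) = h x0" by simp
    moreover have "seqw f w x = seqw f u y1" unfolding w_def y1_def by (simp add: seqw_append)
    ultimately show "proj n (seqw f w x) = h (proj n x)" unfolding x0_def by simp
  qed
  show ?thesis using anf permw resp seqz by blast
qed



lemma ceil_log_char: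
  fixes q K C :: nat
  assumes q2: "q \<ge> 2" and C1: "C \<ge> 1" and lo: "C \<le> q^K"
    and mn: "\<And>k. C \<le> q^k \<Longrightarrow> K \<le> k"
  shows "int K = \<lceil>log (real q) (real C)\<rceil>"
proof -
  have q1: "1 < real q" using q2 by simp
  have Cp: "0 < real C" using C1 by simp
  have "log (real q) (real C) \<le> log (real q) (real q ^ K)"
    using lo q1 Cp by (simp del: log_pow_cancel)
  also have "\<dots> = real K" using q1 by simp
  finally have up: "log (real q) (real C) \<le> real K" .
  have dn: "real K - 1 < log (real q) (real C)"
  proof (cases K)
    case 0
    have "0 \<le> log (real q) (real C)" using q1 C1 by simp
    then show ?thesis using 0 by simp
  next
    case (Suc K')
    have "\<not> C \<le> q^K'" using mn[of K'] Suc by auto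
    then have "real q ^ K' < real C" by (metis not_le of_nat_less_iff of_nat_power)
    then have "log (real q) (real q ^ K') < log (real q) (real C)"
      using q1 Cp by (simp del: log_pow_cancel)
    then show ?thesis using q1 Suc by simp
  qed
  show ?thesis by (rule ceiling_unique[symmetric]) (use up dn in auto)
qed


theorem mainTheorem1:
  fixes q n :: nat and h :: "(nat \<Rightarrow> nat) \<Rightarrow> (nat \<Rightarrow> nat)" and u :: "nat list"
  assumes "q \<ge> 2" and "n \<ge> 1" and "is_AN q n h" and "is_perm n u"
  shows "int (kappa q n h u) =
    \<lceil>log (real q) (real (chromatic_number (cfg q n) (confusion_adj q n h u)))\<rceil>"
proof -
  note q2 = assms(1) and anh = assms(3) and perm_u = assms(4)
  have q0: "0 < q" using q2 by simp
  define V where "V = cfg q n"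
  define Col where "Col k = (\<exists>c. (\<forall>v\<in>V. c v < k) \<and>
      (\<forall>v\<in>V. \<forall>v'\<in>V. confusion_adj q n h u v v' \<longrightarrow> c v \<noteq> c v'))" for k :: nat
  define Pk where "Pk k = (\<exists>f w. is_AN q (n + k) f \<and> is_perm (n + k) w \<and> respects_order n u w
                                  \<and> sequentializes q (n + k) n f w h)" for k :: nat
  define C where "C = chromatic_number (cfg q n) (confusion_adj q n h u)"
  have Cdef: "C = (LEAST k. Col k)" unfolding C_def chromatic_number_def Col_def V_def ..
  have Kdef: "kappa q n h u = (LEAST k. Pk k)" unfolding kappa_def Pk_def ..
  have exCol: "Col (card V)"
  proof -
    obtain g where g: "bij_betw g V {0..<card V}"
      using ex_bij_betw_finite_nat finite_cfg unfolding V_def by blast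
    have "\<forall>v\<in>V. g v < card V" using g unfolding bij_betw_def by auto
    moreover have "\<forall>v\<in>V. \<forall>v'\<in>V. confusion_adj q n h u v v' \<longrightarrow> g v \<noteq> g v'"
      using g unfolding bij_betw_def inj_on_def confusion_adj_def by blast
    ultimately show ?thesis unfolding Col_def by blast
  qed
  have colC: "Col C" unfolding Cdef using exCol by (rule LeastI)
  have C1: "C \<ge> 1"
  proof (rule ccontr)
    assume "\<not> C \<ge> 1"
    then have "C = 0" by simp
    moreover have "(\<lambda>_. 0) \<in> V" unfolding V_def cfg_def using q0 by simp
    ultimately show False using colC unfolding Col_def by blast
  qed
  have up: "Pk k" if "C \<le> q^k" for k
  proof -
    obtain c where c: "\<forall>v\<in>V. c v < C"
      "\<forall>v\<in>V. \<forall>v'\<in>V. confusion_adj q n h u v v' \<longrightarrow> c v \<noteq> c v'"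
      using colC unfolding Col_def by blast
    have "\<forall>v\<in>cfg q n. c v < q^k" using c(1) that unfolding V_def by (meson order_less_le_trans)
    then show ?thesis unfolding Pk_def
      using upper_construction[OF q2 anh perm_u _ c(2)[unfolded V_def]] by blast
  qed
  have mn: "kappa q n h u \<le> k" if "C \<le> q^k" for k
    unfolding Kdef by (rule Least_le) (rule up[OF that])
  have "C \<le> q^C"
  proof -
    have "C < 2^C" by (rule less_exp)
    also have "(2::nat)^C \<le> q^C" using q2 by (rule power_mono) simp
    finally show ?thesis by simp
  qed
  then have "Pk C" by (rule up)
  then have PK: "Pk (kappa q n h u)" unfolding Kdef by (rule LeastI)
  then obtain f w where fw: "is_AN q (n + kappa q n h u) f" "is_perm (n + kappa q n h u) w"
    "respects_order n u w" "sequentializes q (n + kappa q n h u) n f w h"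
    unfolding Pk_def by blast
  have lo: "C \<le> q ^ kappa q n h u"
    unfolding C_def using lower_bound[OF q0 fw(2) perm_u fw(3) fw(4) fw(1)] .
  show ?thesis using ceil_log_char[OF q2 C1 lo mn] unfolding C_def by simp
qed


end
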